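(* Let $x,y>0$, let $\theta\in(0,\frac{\pi}{2})$, and let $\mathbf z=(xy\cos\theta,x^2,y^2)$. For $\theta\in(0,\arccos\frac{2}{\pi})$ let $\beta_0\in(1,\infty)$ be the unique solution of $$\arccos\left(\frac{-1}{\beta_0}\right)=\frac{(\beta_0-\cos\theta)\sqrt{\beta_0^2-1}}{\beta_0(\beta_0\cos\theta-1)}.$$ Let $\Lambda^*_+$ be as defined in the context. Then the following hold. - If $\theta\in(0,\arccos\frac{2}{\pi})$, then $\Lambda^*_+(\mathbf z)=\frac{x^2}{2}+\frac{y^2}{2}-1-\ln(xy)+\ln\left(\frac{\pi\beta_0(\beta_0\cos\theta-1)}{2(\beta_0-\cos\theta)^2}\right)$. - If $\theta\in[\arccos\frac{2}{\pi},\frac{\pi}{2})$, then $\Lambda^*_+(\mathbf z)=\frac{x^2}{2}+\frac{y^2}{2}-1-\ln(xy)$.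
   Context: For $\boldsymbol\lambda=(\lambda_1,\lambda_2,\lambda_3)\in\mathbb{R}^3$ let $D=\lambda_1^2-(1-2\lambda_2)(1-2\lambda_3)$, and let $$S=\{\boldsymbol\lambda:\lambda_2<\tfrac12,\ \lambda_3<\tfrac12,\ D<0\}.$$ For $\boldsymbol\lambda\in S$ put $$\Lambda(\boldsymbol\lambda)=\ln\left(\pi+2\arctan\left(\frac{\lambda_1}{\sqrt{-D}}\right)\right)-\ln\pi-\tfrac12\ln(-D).$$ This is the log moment generating function of $(\hat X\hat Y,\hat X^2,\hat Y^2)$ for independent half-normal $\hat X,\hat Y$. Define $$\Lambda^*_+(\mathbf z)=\sup_{\boldsymbol\lambda\in S,\ \lambda_1>0}\{\langle\boldsymbol\lambda,\mathbf z\rangle-\Lambda(\boldsymbol\lambda)\}.$$ *)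

theory Defs
  imports "HOL-Analysis.Analysis"
begin

definition Dlam :: "real \<Rightarrow> real \<Rightarrow> real \<Rightarrow> real" where
  "Dlam l1 l2 l3 = l1^2 - (1 - 2*l2) * (1 - 2*l3)"

definition S_dom :: "(real \<times> real \<times> real) set" where
  "S_dom = {(l1, l2, l3). l2 < 1/2 \<and> l3 < 1/2 \<and> Dlam l1 l2 l3 < 0}"

definition Lambda :: "real \<Rightarrow> real \<Rightarrow> real \<Rightarrow> real" where
  "Lambda l1 l2 l3 =
     ln (pi + 2 * arctan (l1 / sqrt (- Dlam l1 l2 l3))) - ln pi - (1/2) * ln (- Dlam l1 l2 l3)"

definition Lambda_star_plus :: "real \<times> real \<times> real \<Rightarrow> real" where
  "Lambda_star_plus z =
     (SUP l \<in> {l \<in> S_dom. fst l > 0}.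
        fst l * fst z + fst (snd l) * fst (snd z) + snd (snd l) * snd (snd z)
        - Lambda (fst l) (fst (snd l)) (snd (snd l)))"

end

theory Submission
  imports Defs
begin

definition NN :: "real \<Rightarrow> real \<Rightarrow> real" where
  "NN c t = (c - sin t)*(pi + 2*t) - 2*cos t*(1 - c * sin t)"
definition gg :: "real \<Rightarrow> real \<Rightarrow> real" where
  "gg c t = 4*c * cos t - pi - 2*t"
definition hh :: "real \<Rightarrow> real \<Rightarrow> real" where
  "hh c t = ln pi + ln (cos t) - ln (pi + 2*t) - ln (1 - c * sin t)"

lemma NN_deriv: "DERIV (NN c) t :> cos t * gg c t"
proof -
  have "DERIV (NN c) t :> (- cos t)*(pi + 2*t) + (c - sin t)*2 - (2*(-sin t)*(1 - c * sin t) + 2*cos t*(- c * cos t))"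
    unfolding NN_def[abs_def]
    by (auto intro!: derivative_eq_intros)
  moreover have "(- cos t)*(pi + 2*t) + (c - sin t)*2 - (2*(-sin t)*(1 - c * sin t) + 2*cos t*(- c * cos t)) = cos t * gg c t"
  proof -
    have "(- cos t)*(pi + 2*t) + (c - sin t)*2 - (2*(-sin t)*(1 - c * sin t) + 2*cos t*(- c * cos t)) = cos t * gg c t + 2*c*(1 - (sin t^2 + cos t^2))"
      unfolding gg_def power2_eq_square by algebra
    moreover have "2*c*(1 - (sin t^2 + cos t^2)) = 0" by simp
    ultimately show ?thesis by linarith
  qed
  ultimately show ?thesis by simp
qed

lemma hh_deriv:
  assumes "0 \<le> c" "c < 1" "0 \<le> t" "t < pi/2"
  shows "DERIV (hh c) t :> NN c t / ((pi+2*t)*cos t*(1 - c * sin t))"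
proof -
  have cp: "cos t > 0" using assms by (intro cos_gt_zero_pi) auto
  have sp: "sin t \<le> 1" by simp
  have "c * sin t \<le> c * 1" using assms sp by (intro mult_left_mono) auto
  hence w: "1 - c * sin t > 0" using assms by linarith
  have pp: "pi + 2*t > 0" using assms pi_gt_zero by linarith
  have "DERIV (hh c) t :> (- sin t)/cos t - 2/(pi+2*t) - (- c * cos t)/(1 - c * sin t)"
    unfolding hh_def[abs_def] using cp w pp
    by (auto intro!: derivative_eq_intros)
  moreover have "(- sin t)/cos t - 2/(pi+2*t) - (- c * cos t)/(1 - c * sin t) = NN c t / ((pi+2*t)*cos t*(1 - c * sin t))"
  proof -
    have sc: "sin t * sin t + cos t * cos t = 1" using sin_cos_squared_add[of t] unfolding power2_eq_square .
    show ?thesis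
      using cp w pp unfolding NN_def
      apply (simp add: divide_simps)
      using sc by algebra
  qed
  ultimately show ?thesis by simp
qed

lemma gg_strict:
  assumes "0 \<le> c" "0 \<le> s" "s < t" "t \<le> pi/2"
  shows "gg c t < gg c s"
proof -
  have "cos t \<le> cos s" using assms by (intro cos_monotone_0_pi_le) auto
  hence "4*c*cos t \<le> 4*c*cos s" using assms by (simp add: mult_left_mono)
  thus ?thesis unfolding gg_def using assms by linarith
qed

lemma gg_anti:
  assumes "0 \<le> c" "0 \<le> s" "s \<le> t" "t \<le> pi/2"
  shows "gg c t \<le> gg c s"
  using gg_strict[OF assms(1,2) _ assms(4)] assms(3) by (cases "s = t") auto

lemma NN_incr:
  assumes "0 \<le> c" "0 \<le> a" "a \<le> b" "b \<le> pi/2" "gg c b \<ge> 0"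
  shows "NN c a \<le> NN c b"
proof (rule DERIV_nonneg_imp_nondecreasing[OF assms(3)])
  fix x assume x: "a \<le> x" "x \<le> b"
  have "gg c x \<ge> 0" using gg_anti[of c x b] assms x by linarith
  moreover have "cos x \<ge> 0" using x assms by (intro cos_ge_zero) auto
  ultimately show "\<exists>y. DERIV (NN c) x :> y \<and> y \<ge> 0"
    using NN_deriv by (intro exI[of _ "cos x * gg c x"]) auto
qed

lemma NN_decr:
  assumes "0 \<le> c" "0 \<le> a" "a < b" "b < pi/2" "gg c a < 0"
  shows "NN c b < NN c a"
proof (rule DERIV_neg_imp_decreasing[OF assms(3)])
  fix x assume x: "a \<le> x" "x \<le> b"
  have "gg c x < 0" using gg_anti[of c a x] assms x by linarith
  moreover have "cos x > 0" using x assms by (intro cos_gt_zero_pi) auto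
  ultimately show "\<exists>y. DERIV (NN c) x :> y \<and> y < 0"
    using NN_deriv by (intro exI[of _ "cos x * gg c x"]) (auto simp: mult_pos_neg)
qed

lemma NN_0: "NN c 0 = c*pi - 2" by (simp add: NN_def)
lemma NN_pi2: "NN c (pi/2) = (c - 1)*(2*pi)" by (simp add: NN_def)

lemma NN_root_sign:
  assumes "0 \<le> c" "NN c 0 > 0" "0 < r" "r < pi/2" "NN c r = 0"
  shows "(\<forall>t. 0 \<le> t \<and> t < r \<longrightarrow> NN c t > 0) \<and> (\<forall>t. r < t \<and> t < pi/2 \<longrightarrow> NN c t < 0)"
proof -
  have gr: "gg c r < 0"
  proof (rule ccontr)
    assume "\<not> gg c r < 0"
    hence "NN c 0 \<le> NN c r" using assms by (intro NN_incr) auto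
    thus False using assms by simp
  qed
  have A: "NN c t > 0" if t: "0 \<le> t" "t < r" for t
  proof (cases "gg c t \<ge> 0")
    case True
    hence "NN c 0 \<le> NN c t" using assms t by (intro NN_incr) auto
    thus ?thesis using assms by simp
  next
    case False
    hence "NN c r < NN c t" using assms t by (intro NN_decr) auto
    thus ?thesis using assms by simp
  qed
  have B: "NN c t < 0" if t: "r < t" "t < pi/2" for t
    using NN_decr[of c r t] assms t gr by simp
  show ?thesis using A B by blast
qed

lemma NN_root_exists:
  assumes "0 \<le> c" "c < 1" "NN c 0 > 0"
  shows "\<exists>r. 0 < r \<and> r < pi/2 \<and> NN c r = 0"
proof -
  have cont: "\<forall>x. 0 \<le> x \<and> x \<le> pi/2 \<longrightarrow> isCont (NN c) x"
    using NN_deriv DERIV_isCont by blast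
  have "NN c (pi/2) \<le> 0" using assms NN_pi2[of c] by (simp add: mult_nonpos_nonneg)
  then obtain r where r: "0 \<le> r" "r \<le> pi/2" "NN c r = 0"
    using IVT2[of "NN c" "pi/2" 0 0] cont assms by auto
  have "r \<noteq> 0" using r assms by auto
  moreover have "r \<noteq> pi/2"
  proof
    assume "r = pi/2"
    then have "NN c r = (c-1)*(2*pi)" using NN_pi2[of c] by (metis)
    moreover have "(c-1)*(2*pi) < 0" using assms by (intro mult_neg_pos) auto
    ultimately show False using r by simp
  qed
  ultimately have "0 < r" "r < pi/2" using r by auto
  thus ?thesis using r by blast
qed

lemma NN_neg_small:
  assumes "0 \<le> c" "c \<le> 2/pi" "0 < t" "t < pi/2"
  shows "NN c t < 0"
proof -
  have p3: "pi > 3" by (rule pi_gt3)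
  have "4*c \<le> 8/pi" using assms by simp
  also have "8/pi < pi"
  proof -
    have "3*3 < pi*pi" using p3 by (intro mult_strict_mono) auto
    thus ?thesis using p3 by (simp add: divide_less_eq)
  qed
  finally have "gg c 0 < 0" unfolding gg_def by simp
  hence "NN c t < NN c 0" using assms by (intro NN_decr) auto
  moreover have "NN c 0 \<le> 0" using assms by (simp add: NN_0 field_simps)
  ultimately show ?thesis by simp
qed


lemma den_pos:
  assumes "0 \<le> c" "c < 1" "0 \<le> t" "t < pi/2"
  shows "(pi+2*t)*cos t*(1 - c * sin t) > 0"
proof -
  have cp: "cos t > 0" using assms by (intro cos_gt_zero_pi) auto
  have "c * sin t \<le> c * 1" using assms sin_le_one[of t] by (intro mult_left_mono) auto
  hence w: "1 - c * sin t > 0" using assms by linarith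
  have pp: "pi + 2*t > 0" using assms pi_gt_zero by linarith
  show ?thesis using cp w pp by simp
qed

lemma hh_0: "hh c 0 = 0" by (simp add: hh_def)

lemma hh_le0:
  assumes "0 \<le> c" "c \<le> 2/pi" "c < 1" "0 \<le> t" "t < pi/2"
  shows "hh c t \<le> 0"
proof -
  have "hh c t \<le> hh c 0"
  proof (rule DERIV_nonpos_imp_nonincreasing[OF assms(4)])
    fix x assume x: "0 \<le> x" "x \<le> t"
    have "NN c x \<le> 0"
    proof (cases "x = 0")
      case True thus ?thesis using assms by (simp add: NN_0 field_simps)
    next
      case False thus ?thesis using NN_neg_small[of c x] assms x by simp
    qed
    moreover have "(pi+2*x)*cos x*(1 - c * sin x) > 0" using den_pos assms x by simp
    ultimately show "\<exists>y. DERIV (hh c) x :> y \<and> y \<le> 0"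
      using hh_deriv[of c x] assms x by (intro exI[of _ "NN c x / ((pi+2*x)*cos x*(1 - c * sin x))"])
        (auto simp: divide_nonpos_pos)
  qed
  thus ?thesis by (simp add: hh_0)
qed

lemma hh_le_root:
  assumes "0 \<le> c" "c < 1" "NN c 0 > 0" "0 < r" "r < pi/2" "NN c r = 0" "0 < t" "t < pi/2"
  shows "hh c t \<le> hh c r"
proof -
  note sg = NN_root_sign[OF assms(1,3,4,5,6)]
  show ?thesis
  proof (cases "t \<le> r")
    case True
    show ?thesis
    proof (rule DERIV_nonneg_imp_nondecreasing[of t r "hh c", OF True])
      fix x assume x: "t \<le> x" "x \<le> r"
      have "NN c x \<ge> 0"
      proof (cases "x = r")
        case True thus ?thesis using assms by simp
      next
        case False thus ?thesis using sg[THEN conjunct1, rule_format, of x] x assms by simp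
      qed
      moreover have "(pi+2*x)*cos x*(1 - c * sin x) > 0" using den_pos assms x by simp
      ultimately show "\<exists>y. DERIV (hh c) x :> y \<and> y \<ge> 0"
        using hh_deriv[of c x] assms x by (intro exI[of _ "NN c x / ((pi+2*x)*cos x*(1 - c * sin x))"])
          auto
    qed
  next
    case False
    show ?thesis
    proof (rule DERIV_nonpos_imp_nonincreasing[of r t "hh c"])
      show "r \<le> t" using False by simp
      fix x assume x: "r \<le> x" "x \<le> t"
      have "NN c x \<le> 0"
      proof (cases "x = r")
        case True thus ?thesis using assms by simp
      next
        case False thus ?thesis using sg[THEN conjunct2, rule_format, of x] x assms by simp
      qed
      moreover have "(pi+2*x)*cos x*(1 - c * sin x) > 0" using den_pos assms x by simp
      ultimately show "\<exists>y. DERIV (hh c) x :> y \<and> y \<le> 0"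
        using hh_deriv[of c x] assms x by (intro exI[of _ "NN c x / ((pi+2*x)*cos x*(1 - c * sin x))"])
          (auto simp: divide_nonpos_pos)
    qed
  qed
qed


lemma aux2: "(A::real) = 2*(X - Y) \<Longrightarrow> (X = Y) = (A = 0)" by auto

lemma upper:
  fixes x y c l1 l2 l3 :: real
  assumes xy: "x > 0" "y > 0" and c: "0 \<le> c" "c < 1"
    and l: "l2 < 1/2" "l3 < 1/2" "Dlam l1 l2 l3 < 0" "l1 > 0"
  shows "\<exists>t. 0 < t \<and> t < pi/2 \<and>
    l1*(x*y*c) + l2*x^2 + l3*y^2 - Lambda l1 l2 l3 \<le> x^2/2+y^2/2-1-ln(x*y) + hh c t"
proof -
  define a where "a = 1 - 2*l2"
  define b where "b = 1 - 2*l3"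
  define d where "d = - Dlam l1 l2 l3"
  have a: "a > 0" and b: "b > 0" and d: "d > 0" using l by (auto simp: a_def b_def d_def)
  have dab: "d = a*b - l1^2" by (simp add: d_def Dlam_def a_def b_def)
  define p where "p = sqrt (a*b)"
  have p: "p > 0" using a b by (simp add: p_def)
  have pp: "p^2 = a*b" using a b by (simp add: p_def)
  define t where "t = arctan (l1 / sqrt d)"
  have t0: "0 < t" using l d by (simp add: t_def)
  have t1: "t < pi/2" using arctan_bounded[of "l1 / sqrt d"] by (simp add: t_def)
  have sd: "sqrt d > 0" "(sqrt d)^2 = d" using d by auto
  have e1: "(l1 / sqrt d)^2 = l1^2/d" using sd by (simp add: power_divide)
  have e2: "(p / sqrt d)^2 = a*b/d" using sd pp by (simp add: power_divide)
  have e3: "a*b = d + l1^2" using dab by simp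
  have e4: "(d + l1^2)/d = 1 + l1^2/d" using d by (simp add: add_divide_distrib)
  have "1 + (l1 / sqrt d)^2 = (p / sqrt d)^2"
    using e1 e2 e3 e4 by simp
  hence "sqrt (1 + (l1 / sqrt d)^2) = p / sqrt d" using p sd by simp
  hence cost: "cos t = sqrt d / p" unfolding t_def cos_arctan by simp
  have sint: "sin t = l1 / p" unfolding t_def sin_arctan
    using \<open>sqrt (1 + (l1 / sqrt d)^2) = p / sqrt d\<close> sd p by (simp add: field_simps)
  have cpos: "cos t > 0" using cost sd p by simp
  have l1p: "l1 = p * sin t" using sint p by simp
  have lnd: "(1/2) * ln d = ln p + ln (cos t)"
  proof -
    have "ln d = 2 * ln (sqrt d)" using d by (simp add: ln_sqrt)
    moreover have "sqrt d = p * cos t" using cost p by simp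
    ultimately show ?thesis using p cpos by (simp add: ln_mult)
  qed
  have "Lambda l1 l2 l3 = ln (pi + 2*t) - ln pi - (1/2) * ln d"
    unfolding Lambda_def by (simp add: t_def d_def)
  hence Lam: "Lambda l1 l2 l3 = ln (pi + 2*t) - ln pi - ln p - ln (cos t)"
    using lnd by linarith
  have amgm: "a*x^2 + b*y^2 \<ge> 2*p*x*y"
  proof -
    have "0 \<le> (sqrt a * x - sqrt b * y)^2" by simp
    also have "\<dots> = a*x^2 + b*y^2 - 2*p*x*y"
      using a b by (simp add: power2_eq_square algebra_simps p_def real_sqrt_mult)
    finally show ?thesis by simp
  qed
  have quad: "l2*x^2 + l3*y^2 = x^2/2 + y^2/2 - (a*x^2 + b*y^2)/2"
    unfolding a_def b_def by (simp add: field_simps)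
  define q where "q = p*x*y"
  have q: "q > 0" using p xy by (simp add: q_def)
  define w where "w = 1 - c * sin t"
  have "c * sin t \<le> c * 1" using c sin_le_one[of t] by (intro mult_left_mono) auto
  hence w: "w > 0" using c by (simp add: w_def)
  have "ln (q*w) \<le> q*w - 1" using q w by (intro ln_le_minus_one) simp
  moreover have "ln (q*w) = ln q + ln w" using q w by (intro ln_mult_pos) auto
  moreover have "q*w = q - q * c * sin t" by (simp add: w_def algebra_simps)
  ultimately have lnqw: "ln q + ln w \<le> q - q * c * sin t - 1" by linarith
  have lnp: "ln p = ln q - ln (x*y)" using p xy by (simp add: q_def ln_mult)
  have "l1*(x*y*c) + l2*x^2 + l3*y^2 - Lambda l1 l2 l3
      = q * c * sin t + x^2/2 + y^2/2 - (a*x^2 + b*y^2)/2 - ln (pi + 2*t) + ln pi + ln p + ln (cos t)"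
    using l1p quad Lam by (simp add: q_def algebra_simps)
  also have "\<dots> \<le> x^2/2+y^2/2-1-ln(x*y) + hh c t"
    using amgm lnqw lnp unfolding hh_def w_def q_def by (simp add: algebra_simps)
  finally show ?thesis using t0 t1 by blast
qed


lemma attain:
  fixes x y c t :: real
  assumes xy: "x > 0" "y > 0" and c: "0 \<le> c" "c < 1" and t: "0 < t" "t < pi/2"
  shows "\<exists>l1 l2 l3. l2 < 1/2 \<and> l3 < 1/2 \<and> Dlam l1 l2 l3 < 0 \<and> l1 > 0 \<and>
    l1*(x*y*c) + l2*x^2 + l3*y^2 - Lambda l1 l2 l3 = x^2/2+y^2/2-1-ln(x*y) + hh c t"
proof -
  define w where "w = 1 - c * sin t"
  have "c * sin t \<le> c * 1" using c sin_le_one[of t] by (intro mult_left_mono) auto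
  hence w: "w > 0" using c by (simp add: w_def)
  define q where "q = 1/w"
  have q: "q > 0" using w by (simp add: q_def)
  define p where "p = q/(x*y)"
  have p: "p > 0" using q xy by (simp add: p_def)
  define a where "a = p*y/x"
  define b where "b = p*x/y"
  have a: "a > 0" and b: "b > 0" using p xy by (auto simp: a_def b_def)
  have ab: "a*b = p^2" using xy by (simp add: a_def b_def power2_eq_square field_simps)
  have cp: "cos t > 0" using t by (intro cos_gt_zero_pi) auto
  have sp: "sin t > 0" using t by (intro sin_gt_zero) auto
  define l1 where "l1 = p * sin t"
  define l2 where "l2 = (1 - a)/2"
  define l3 where "l3 = (1 - b)/2"
  have D: "Dlam l1 l2 l3 = - ((p * cos t)^2)"
  proof -
    have "1 - 2*l2 = a" "1 - 2*l3 = b" by (simp_all add: l2_def l3_def field_simps)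
    hence "Dlam l1 l2 l3 = l1^2 - a*b" unfolding Dlam_def by simp
    also have "\<dots> = p^2 * (sin t^2 - 1)" using ab by (simp add: l1_def power_mult_distrib algebra_simps)
    also have "sin t^2 - 1 = - (cos t^2)" using sin_cos_squared_add[of t] by linarith
    finally show ?thesis by (simp add: power_mult_distrib)
  qed
  have Dn: "Dlam l1 l2 l3 < 0" using D p cp by simp
  have sq: "sqrt (- Dlam l1 l2 l3) = p * cos t" using D p cp by simp
  have at: "arctan (l1 / sqrt (- Dlam l1 l2 l3)) = t"
  proof -
    have "l1 / sqrt (- Dlam l1 l2 l3) = tan t" using sq p cp by (simp add: l1_def tan_def)
    thus ?thesis using t arctan_tan[of t] by simp
  qed
  have lnD: "(1/2) * ln (- Dlam l1 l2 l3) = ln p + ln (cos t)"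
  proof -
    have "ln (- Dlam l1 l2 l3) = ln ((p * cos t)^2)" using D by simp
    also have "\<dots> = 2 * ln (p * cos t)" using p cp by (simp add: ln_realpow)
    finally show ?thesis using p cp by (simp add: ln_mult)
  qed
  have "Lambda l1 l2 l3 = ln (pi + 2*t) - ln pi - (1/2) * ln (- Dlam l1 l2 l3)"
    unfolding Lambda_def using at by simp
  hence Lam: "Lambda l1 l2 l3 = ln (pi + 2*t) - ln pi - ln p - ln (cos t)"
    using lnD by linarith
  have xyp: "x*y > 0" using xy by simp
  have pe: "p = 1/(w*(x*y))" by (simp add: p_def q_def)
  have wxy: "w*(x*y) > 0" using w xyp by simp
  have "ln p = ln 1 - ln (w*(x*y))" unfolding pe using ln_divide_pos[OF _ wxy, of 1] by simp
  hence lnp: "ln p = - ln w - ln (x*y)" using ln_mult_pos[OF w xyp] by simp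
  have ax: "a*x^2 = q" and by2: "b*y^2 = q" and pxy: "p*(x*y) = q"
    using xy by (simp_all add: a_def b_def p_def power2_eq_square field_simps)
  have qw: "q*w = 1" using w by (simp add: q_def)
  have "l1*(x*y*c) + l2*x^2 + l3*y^2 - Lambda l1 l2 l3
     = (p*(x*y)) * c * sin t + x^2/2 + y^2/2 - (a*x^2)/2 - (b*y^2)/2 - ln (pi + 2*t) + ln pi + ln p + ln (cos t)"
    using Lam by (simp add: l1_def l2_def l3_def algebra_simps diff_divide_distrib)
  also have "\<dots> = x^2/2 + y^2/2 - q*w - ln (pi + 2*t) + ln pi + ln p + ln (cos t)"
    unfolding ax by2 pxy by (simp add: w_def algebra_simps)
  also have "\<dots> = x^2/2+y^2/2-1-ln(x*y) + hh c t"
    unfolding qw lnp by (simp add: hh_def w_def)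
  finally show ?thesis using Dn p sp a b
    by (intro exI[of _ l1] exI[of _ l2] exI[of _ l3]) (auto simp: l1_def l2_def l3_def)
qed


lemma conv:
  fixes b :: real
  assumes b: "b > 1"
  shows "0 < arcsin (1/b) \<and> arcsin (1/b) < pi/2 \<and> sin (arcsin (1/b)) = 1/b
    \<and> cos (arcsin (1/b)) = sqrt (b^2 - 1)/b \<and> arccos (-1/b) = pi/2 + arcsin (1/b)"
proof -
  have s: "0 < 1/b" "1/b < 1" using b by auto
  have m1: "-1 < 1/b" using s by linarith
  have t1: "- (pi/2) < arcsin (1/b) \<and> arcsin (1/b) < pi/2" using arcsin_lt_bounded[OF m1 s(2)] .
  have t0: "0 < arcsin (1/b)" using arcsin_less_arcsin[of 0 "1/b"] s by simp
  have m1': "-1 \<le> 1/b" "1/b \<le> 1" using b by (auto simp: divide_simps)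
  have sn: "sin (arcsin (1/b)) = 1/b" using sin_arcsin[OF m1'] .
  have "cos (arcsin (1/b)) = sqrt (1 - (1/b)^2)" using cos_arcsin[OF m1'] .
  also have "1 - (1/b)^2 = (b^2 - 1)/b^2" using b by (simp add: field_simps)
  also have "sqrt ((b^2 - 1)/b^2) = sqrt (b^2 - 1)/b" using b by (simp add: real_sqrt_divide)
  finally have cs: "cos (arcsin (1/b)) = sqrt (b^2 - 1)/b" .
  have "arccos (-1/b) = arccos (- (1/b))" by simp
  also have "\<dots> = pi - arccos (1/b)" using arccos_minus[OF m1'] .
  also have "arccos (1/b) = pi/2 - arcsin (1/b)" using arcsin_arccos_eq[OF m1'] by simp
  finally have ac: "arccos (-1/b) = pi/2 + arcsin (1/b)" by simp
  show ?thesis using t0 t1 sn cs ac by simp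
qed

lemma eq_iff:
  fixes b c :: real
  assumes b: "b > 1" and c: "0 \<le> c" "c < 1"
  shows "(arccos (-1/b) = (b - c) * sqrt (b^2 - 1) / (b * (b * c - 1))) \<longleftrightarrow> NN c (arcsin (1/b)) = 0"
proof -
  define t where "t = arcsin (1/b)"
  define C where "C = cos t"
  note cv = conv[OF b, folded t_def]
  have tb: "- (pi/2) < t" "t < pi/2" using cv by auto
  have C: "C > 0" unfolding C_def by (rule cos_gt_zero_pi[OF tb])
  have sq: "sqrt (b^2 - 1) = b * C" using cv b by (simp add: C_def)
  have sn: "sin t = 1/b" using cv by simp
  have "NN c t = (c - 1/b)*(pi+2*t) - 2*C*(1 - c*(1/b))" unfolding NN_def C_def sn by simp
  also have "\<dots> = ((b*c - 1)*(pi + 2*t) - 2*C*(b - c))/b" using b by (simp add: field_simps)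
  finally have N: "NN c t = ((b*c - 1)*(pi + 2*t) - 2*C*(b - c))/b" .
  have bc: "b - c > 0" using b c by simp
  show ?thesis
  proof (cases "b*c - 1 = 0")
    case True
    have "NN c t \<noteq> 0" using N True C bc b by simp
    moreover have "arccos (-1/b) \<noteq> (b - c) * sqrt (b^2 - 1) / (b * (b * c - 1))"
      using True cv pi_gt_zero by (simp add: t_def)
    ultimately show ?thesis by (simp add: t_def)
  next
    case False
    have "(b - c) * sqrt (b^2 - 1) / (b * (b * c - 1)) = (b - c) * C / (b*c - 1)"
      using sq b False by (simp add: field_simps)
    hence "(arccos (-1/b) = (b - c) * sqrt (b^2 - 1) / (b * (b * c - 1))) \<longleftrightarrow>
        (pi/2 + t = (b - c) * C / (b*c - 1))" using cv by (simp add: t_def)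
    also have "\<dots> \<longleftrightarrow> (pi/2 + t)*(b*c - 1) = (b - c) * C"
      using False by (simp add: eq_divide_eq)
    also have "\<dots> \<longleftrightarrow> (b*c - 1)*(pi + 2*t) - 2*C*(b - c) = 0"
    proof -
      have "(b*c - 1)*(pi + 2*t) - 2*C*(b - c) = 2*((pi/2 + t)*(b*c - 1) - (b - c) * C)"
        by (simp add: field_simps)
      thus ?thesis by (rule aux2)
    qed
    also have "\<dots> \<longleftrightarrow> NN c t = 0" using N b by simp
    finally show ?thesis by (simp add: t_def)
  qed
qed

lemma val:
  fixes b c :: real
  assumes b: "b > 1" and c: "0 \<le> c" "c < 1" and N0: "NN c (arcsin (1/b)) = 0"
  shows "hh c (arcsin (1/b)) = ln (pi * b * (b * c - 1) / (2 * (b - c)^2))"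
proof -
  define t where "t = arcsin (1/b)"
  define C where "C = cos t"
  note cv = conv[OF b, folded t_def]
  have tb: "- (pi/2) < t" "t < pi/2" using cv by auto
  have C: "C > 0" unfolding C_def by (rule cos_gt_zero_pi[OF tb])
  have sn: "sin t = 1/b" using cv by simp
  have "NN c t = (c - 1/b)*(pi+2*t) - 2*C*(1 - c*(1/b))" unfolding NN_def C_def sn by simp
  also have "\<dots> = ((b*c - 1)*(pi + 2*t) - 2*C*(b - c))/b" using b by (simp add: field_simps)
  finally have N: "NN c t = ((b*c - 1)*(pi + 2*t) - 2*C*(b - c))/b" .
  have bc: "b - c > 0" using b c by simp
  have pt: "pi + 2*t > 0" using cv pi_gt_zero by linarith
  have e: "(b*c - 1)*(pi + 2*t) = 2*C*(b - c)" using N N0 b by (simp add: t_def)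
  have "2*C*(b-c) > 0" using C bc by simp
  hence bc1: "b*c - 1 > 0" using e pt by (metis zero_less_mult_pos2)
  have w: "1 - c * sin t = (b - c)/b" unfolding sn using b by (simp add: field_simps)
  have wp: "(b - c)/b > 0" using bc b by simp
  have "hh c t = ln pi + ln C - ln (pi + 2*t) - ln ((b - c)/b)"
    unfolding hh_def C_def[symmetric] w by simp
  also have "\<dots> = ln (pi * C / ((pi + 2*t) * ((b - c)/b)))"
  proof -
    have pc: "pi * C > 0" using C by simp
    have pw: "0 < (pi + 2*t) * ((b - c)/b)" using pt wp by (rule mult_pos_pos)
    have e1: "ln (pi * C / ((pi + 2*t) * ((b - c)/b))) = ln (pi * C) - ln ((pi + 2*t) * ((b - c)/b))"
      using ln_divide_pos[OF pc pw] .
    have e2: "ln (pi * C) = ln pi + ln C" using C by (intro ln_mult_pos) auto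
    have e3: "ln ((pi + 2*t) * ((b - c)/b)) = ln (pi + 2*t) + ln ((b - c)/b)"
      using pt wp by (intro ln_mult_pos) auto
    show ?thesis using e1 e2 e3 by linarith
  qed
  also have "pi * C / ((pi + 2*t) * ((b - c)/b)) = pi * b * (b * c - 1) / (2 * (b - c)^2)"
  proof -
    have pe: "pi + 2*t = 2*C*(b-c)/(b*c-1)" using e bc1 by (simp add: field_simps)
    have "pi * C / ((pi + 2*t) * ((b - c)/b)) = pi * C / ((2*C*(b-c)/(b*c-1)) * ((b - c)/b))"
      by (simp only: pe)
    also have "\<dots> = pi * b * (b * c - 1) / (2 * (b - c)^2)"
    proof -
      have n: "C \<noteq> 0" "b - c \<noteq> 0" "b*c - 1 \<noteq> 0" "b \<noteq> 0" using C bc bc1 b by auto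
      have "pi * C / ((2*C*(b-c)/(b*c-1)) * ((b - c)/b)) = (pi * b * (b * c - 1) * C) / ((2 * (b - c)^2) * C)"
        using n by (simp add: field_simps power2_eq_square)
      also have "\<dots> = pi * b * (b * c - 1) / (2 * (b - c)^2)" using n by simp
      finally show ?thesis .
    qed
    finally show ?thesis .
  qed
  finally show ?thesis by (simp add: t_def)
qed


theorem lemma9:
  fixes x y \<theta> :: real
  assumes "x > 0" and "y > 0" and "0 < \<theta>" and "\<theta> < pi/2"
  defines "z \<equiv> (x * y * cos \<theta>, x^2, y^2)"
  shows "(\<theta> < arccos (2/pi) \<longrightarrow>
           (\<exists>!b0::real. b0 > 1 \<and>
              arccos (-1/b0) = (b0 - cos \<theta>) * sqrt (b0^2 - 1) / (b0 * (b0 * cos \<theta> - 1)))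
         \<and> (\<forall>b0::real. b0 > 1 \<and>
              arccos (-1/b0) = (b0 - cos \<theta>) * sqrt (b0^2 - 1) / (b0 * (b0 * cos \<theta> - 1))
              \<longrightarrow> Lambda_star_plus z = x^2/2 + y^2/2 - 1 - ln (x*y)
                    + ln (pi * b0 * (b0 * cos \<theta> - 1) / (2 * (b0 - cos \<theta>)^2))))
       \<and> (arccos (2/pi) \<le> \<theta> \<longrightarrow> Lambda_star_plus z = x^2/2 + y^2/2 - 1 - ln (x*y))"
proof -
  note xy = assms(1,2)
  define c where "c = cos \<theta>"
  have c0: "0 < c" unfolding c_def using assms by (intro cos_gt_zero_pi) auto
  have c1: "c < 1" unfolding c_def using cos_monotone_0_pi[of 0 \<theta>] assms by simp
  define K where "K = x^2/2 + y^2/2 - 1 - ln (x*y)"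
  define A where "A = {l \<in> S_dom. fst l > 0}"
  define f where "f = (\<lambda>l::real\<times>real\<times>real. fst l * fst z + fst (snd l) * fst (snd z) + snd (snd l) * snd (snd z)
        - Lambda (fst l) (fst (snd l)) (snd (snd l)))"
  have LS: "Lambda_star_plus z = (SUP l\<in>A. f l)" unfolding Lambda_star_plus_def A_def f_def by simp
  have fval: "f (l1, l2, l3) = l1*(x*y*c) + l2*x^2 + l3*y^2 - Lambda l1 l2 l3" for l1 l2 l3
    by (simp add: f_def z_def c_def)
  have F1: "\<exists>t. 0 < t \<and> t < pi/2 \<and> f l \<le> K + hh c t" if "l \<in> A" for l
  proof -
    obtain l1 l2 l3 where l: "l = (l1, l2, l3)" by (cases l) auto
    have "l2 < 1/2" "l3 < 1/2" "Dlam l1 l2 l3 < 0" "l1 > 0"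
      using that by (auto simp: A_def S_dom_def l)
    from upper[OF xy less_imp_le[OF c0] c1 this] show ?thesis
      unfolding l fval K_def by simp
  qed
  have F2: "\<exists>l\<in>A. f l = K + hh c t" if tt: "0 < t" "t < pi/2" for t
  proof -
    obtain l1 l2 l3 where "l2 < 1/2 \<and> l3 < 1/2 \<and> Dlam l1 l2 l3 < 0 \<and> l1 > 0 \<and>
       l1*(x*y*c) + l2*x^2 + l3*y^2 - Lambda l1 l2 l3 = x^2/2+y^2/2-1-ln(x*y) + hh c t"
      using attain[OF xy less_imp_le[OF c0] c1 tt] by blast
    thus ?thesis
      by (intro bexI[of _ "(l1, l2, l3)"]) (auto simp: fval K_def A_def S_dom_def)
  qed
  have Ane: "A \<noteq> {}" using F2[of "pi/4"] by auto
  have UB: "bdd_above (f ` A) \<and> (SUP l\<in>A. f l) \<le> K + M"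
    if M: "\<And>t. 0 < t \<Longrightarrow> t < pi/2 \<Longrightarrow> hh c t \<le> M" for M
  proof -
    have le: "f l \<le> K + M" if "l \<in> A" for l
      using F1[OF that] M by force
    hence "bdd_above (f ` A)" by (intro bdd_aboveI2) 
    moreover have "(SUP l\<in>A. f l) \<le> K + M" using Ane le by (intro cSUP_least) auto
    ultimately show ?thesis by blast
  qed
  have LB: "K + hh c t \<le> (SUP l\<in>A. f l)"
    if M: "\<And>t. 0 < t \<Longrightarrow> t < pi/2 \<Longrightarrow> hh c t \<le> M" and t: "0 < t" "t < pi/2" for M t
  proof -
    obtain l where l: "l \<in> A" "f l = K + hh c t" using F2[OF t] by blast
    have "f l \<le> (SUP l\<in>A. f l)" using UB[OF M] l by (intro cSUP_upper) auto
    thus ?thesis using l by simp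
  qed
  have p2: "2 < pi" using pi_gt3 by simp
  have tp: "-1 \<le> 2/pi" "2/pi \<le> 1" using p2 by (auto simp: field_simps)
  have acb: "0 \<le> arccos (2/pi)" "arccos (2/pi) \<le> pi" using arccos_bounded[OF tp] by auto
  show ?thesis
  proof (intro conjI impI)
    assume th: "arccos (2/pi) \<le> \<theta>"
    have "c \<le> cos (arccos (2/pi))" unfolding c_def using acb th assms
      by (intro cos_monotone_0_pi_le) auto
    hence c2: "c \<le> 2/pi" using tp by simp
    have M0: "hh c t \<le> 0" if "0 < t" "t < pi/2" for t
      using hh_le0[of c t] c0 c1 c2 that by simp
    have up: "(SUP l\<in>A. f l) \<le> K" using UB[OF M0] by simp
    have "isCont (hh c) 0" using hh_deriv[of c 0] c0 c1 DERIV_isCont by auto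
    hence "(hh c \<longlongrightarrow> hh c 0) (at 0)" by (simp add: isCont_def)
    hence "(hh c \<longlongrightarrow> 0) (at_right 0)" by (simp add: hh_0 filterlim_at_split)
    hence lim: "((\<lambda>t. K + hh c t) \<longlongrightarrow> K + 0) (at_right 0)" by (intro tendsto_intros)
    have ev: "eventually (\<lambda>t. K + hh c t \<le> (SUP l\<in>A. f l)) (at_right 0)"
      unfolding eventually_at_right[of 0 1, OF zero_less_one]
      using LB[OF M0] by (intro exI[of _ "pi/2"]) auto
    have "K \<le> (SUP l\<in>A. f l)" using tendsto_upperbound[OF lim ev] by simp
    with up show "Lambda_star_plus z = x^2/2 + y^2/2 - 1 - ln (x*y)"
      unfolding LS K_def by simp
  next
    assume th: "\<theta> < arccos (2/pi)"
    have "cos (arccos (2/pi)) < c" unfolding c_def using acb th assms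
      by (intro cos_monotone_0_pi) auto
    hence c2: "2/pi < c" using tp by simp
    have N0: "NN c 0 > 0" using c2 p2 by (simp add: NN_0 field_simps)
    obtain r where r: "0 < r" "r < pi/2" "NN c r = 0"
      using NN_root_exists[OF less_imp_le[OF c0] c1 N0] by blast
    note sg = NN_root_sign[OF less_imp_le[OF c0] N0 r]
    have uniq: "r1 = r2" if "0 < r1" "r1 < pi/2" "NN c r1 = 0" "0 < r2" "r2 < pi/2" "NN c r2 = 0" for r1 r2
    proof (rule ccontr)
      assume ne: "r1 \<noteq> r2"
      show False
      proof (cases "r1 < r2")
        case True
        thus False using NN_root_sign[OF less_imp_le[OF c0] N0 that(1-3)] that by auto
      next
        case False
        hence "r2 < r1" using ne by simp
        thus False using NN_root_sign[OF less_imp_le[OF c0] N0 that(4-6)] that by auto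
      qed
    qed
    have Mr: "hh c t \<le> hh c r" if "0 < t" "t < pi/2" for t
      using hh_le_root[OF less_imp_le[OF c0] c1 N0 r that] .
    have Sval: "(SUP l\<in>A. f l) = K + hh c r"
      using UB[OF Mr] LB[OF Mr r(1,2)] by simp
    define E where "E = (\<lambda>b0::real. b0 > 1 \<and> arccos (-1/b0) = (b0 - c) * sqrt (b0^2 - 1) / (b0 * (b0 * c - 1)))"
    have Eiff: "E b0 \<longleftrightarrow> b0 > 1 \<and> NN c (arcsin (1/b0)) = 0" for b0
      unfolding E_def using eq_iff[of b0 c] c0 c1 by auto
    have Eroot: "arcsin (1/b0) = r" if "E b0" for b0
    proof -
      have "b0 > 1" "NN c (arcsin (1/b0)) = 0" using Eiff that by auto
      moreover have "0 < arcsin (1/b0)" "arcsin (1/b0) < pi/2" using conv[OF \<open>b0 > 1\<close>] by auto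
      ultimately show ?thesis using uniq r by blast
    qed
    show "\<exists>!b0::real. b0 > 1 \<and>
              arccos (-1/b0) = (b0 - cos \<theta>) * sqrt (b0^2 - 1) / (b0 * (b0 * cos \<theta> - 1))"
    proof -
      have sr: "0 < sin r" using r by (intro sin_gt_zero) auto
      have cr: "0 < cos r" using r by (intro cos_gt_zero_pi) auto
      have "sin r < 1"
      proof -
        have "sin r ^ 2 < 1" using sin_cos_squared_add[of r] cr by (smt (verit) zero_less_power)
        thus ?thesis using sr by (smt (verit) one_le_power)
      qed
      hence b1: "1 / sin r > 1" using sr by (simp add: field_simps)
      have "arcsin (1 / (1 / sin r)) = r" using r by (simp add: arcsin_sin)
      hence e: "E (1 / sin r)" using Eiff b1 r by simp
      have "\<exists>!b0. E b0"
      proof (rule ex1I[of _ "1 / sin r"])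
        show "E (1 / sin r)" by (rule e)
        fix b assume Eb: "E b"
        have "arcsin (1/b) = arcsin (1/(1/sin r))" using Eroot[OF Eb] Eroot[OF e] by simp
        moreover have "b > 1" using Eb by (simp add: E_def)
        ultimately have "1/b = 1/(1/sin r)" using b1
          by (subst (asm) arcsin_eq_iff) auto
        hence "1/(1/b) = 1/(1/(1/sin r))" by (rule arg_cong)
        thus "b = 1 / sin r" by (simp only: divide_divide_eq_right)
      qed
      thus ?thesis unfolding E_def c_def .
    qed
    show "\<forall>b0::real. b0 > 1 \<and>
              arccos (-1/b0) = (b0 - cos \<theta>) * sqrt (b0^2 - 1) / (b0 * (b0 * cos \<theta> - 1))
              \<longrightarrow> Lambda_star_plus z = x^2/2 + y^2/2 - 1 - ln (x*y)
                    + ln (pi * b0 * (b0 * cos \<theta> - 1) / (2 * (b0 - cos \<theta>)^2))"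
    proof (intro allI impI)
      fix b0 assume "b0 > 1 \<and> arccos (-1/b0) = (b0 - cos \<theta>) * sqrt (b0^2 - 1) / (b0 * (b0 * cos \<theta> - 1))"
      hence Eb: "E b0" unfolding E_def c_def .
      hence b1: "b0 > 1" and Nb: "NN c (arcsin (1/b0)) = 0" using Eiff by auto
      have "hh c r = ln (pi * b0 * (b0 * c - 1) / (2 * (b0 - c)^2))"
        using val[OF b1 less_imp_le[OF c0] c1 Nb] Eroot[OF Eb] by simp
      thus "Lambda_star_plus z = x^2/2 + y^2/2 - 1 - ln (x*y)
                    + ln (pi * b0 * (b0 * cos \<theta> - 1) / (2 * (b0 - cos \<theta>)^2))"
        unfolding LS Sval K_def c_def by simp
    qed
  qed
qed

end
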